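(* Let $\Gamma$ be a fixed graph on $K$ vertices and assume $K=o(\sqrt n)$, $\mathbb{E}_0(X_\Gamma)=\omega(1)$ and $\mathbb{E}_0(L^2)=1+o(1)$. Define \[ \mathcal I_\Gamma=\frac{1}{X_\Gamma^2}\sum_{\Gamma',\Gamma''}\mathbf 1_{\Gamma'\cap\Gamma''\neq\emptyset}, \] where $\Gamma'$ and $\Gamma''$ range over all copies of $\Gamma$ in $G$ and $\Gamma'\cap\Gamma''\ne\emptyset$ means their vertex sets intersect (with $\mathcal I_\Gamma:=0$ when $X_\Gamma=0$). Then $\mathbb{E}_0(\mathcal I_\Gamma)=o(1)$.
   Context: Model: $n$ nodes, $\lambda>0$. $\mathbb{P}_0$: $G\sim\mathcal G(n,\lambda/n)$. $\mathbb{P}_1$: $G=G_0\cup G'$ with $G_0\sim\mathcal G(n,\lambda/n)$ and $G'$ the image of $\Gamma$ under a uniformly random injection of its vertex set into $[n]$ independent of $G_0$. $X_\Gamma$ is the number of copies (subgraphs isomorphic to $\Gamma$) of $\Gamma$ in $G$; $L=\mathbb{P}_1(G)/\mathbb{P}_0(G)$; $\mathbb{E}_0$ is expectation under $\mathbb{P}_0$. Asymptotics as $n\to\infty$. *)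

theory Defs
  imports "HOL-Probability.Probability"
begin

text \<open>Graphs on vertex set [n] = {0..<n} are represented by their edge sets:
  sets of 2-element subsets of {..<n}.\<close>

definition all_edges :: "nat \<Rightarrow> nat set set" where
  "all_edges n = {e. e \<subseteq> {..<n} \<and> card e = 2}"

definition ER :: "nat \<Rightarrow> real \<Rightarrow> nat set set pmf" where
  "ER n p = map_pmf (\<lambda>f. {e \<in> all_edges n. f e})
              (Pi_pmf (all_edges n) False (\<lambda>_. bernoulli_pmf p))"

definition P0 :: "real \<Rightarrow> nat \<Rightarrow> nat set set pmf" where
  "P0 lam n = ER n (lam / real n)"

definition injections :: "nat \<Rightarrow> nat \<Rightarrow> (nat \<Rightarrow> nat) set" where
  "injections K n = {\<phi>. \<phi> \<in> {..<K} \<rightarrow>\<^sub>E {..<n} \<and> inj_on \<phi> {..<K}}"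

definition P1 :: "real \<Rightarrow> nat \<Rightarrow> nat \<Rightarrow> nat set set \<Rightarrow> nat set set pmf" where
  "P1 lam n K EG = bind_pmf (P0 lam n) (\<lambda>G0.
      map_pmf (\<lambda>\<phi>. G0 \<union> (\<lambda>e. \<phi> ` e) ` EG) (pmf_of_set (injections K n)))"

definition LR :: "real \<Rightarrow> nat \<Rightarrow> nat \<Rightarrow> nat set set \<Rightarrow> nat set set \<Rightarrow> real" where
  "LR lam n K EG G = pmf (P1 lam n K EG) G / pmf (P0 lam n) G"

definition copies :: "nat \<Rightarrow> nat \<Rightarrow> nat set set \<Rightarrow> nat set set \<Rightarrow> (nat set \<times> nat set set) set" where
  "copies n K EG G = {(V, F). V \<subseteq> {..<n} \<and> F \<subseteq> G \<and>
      (\<exists>\<phi>. bij_betw \<phi> {..<K} V \<and> F = (\<lambda>e. \<phi> ` e) ` EG)}"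

definition X_count :: "nat \<Rightarrow> nat \<Rightarrow> nat set set \<Rightarrow> nat set set \<Rightarrow> nat" where
  "X_count n K EG G = card (copies n K EG G)"

definition I_stat :: "nat \<Rightarrow> nat \<Rightarrow> nat set set \<Rightarrow> nat set set \<Rightarrow> real" where
  "I_stat n K EG G = (if X_count n K EG G = 0 then 0 else
     real (card {(c1, c2) \<in> copies n K EG G \<times> copies n K EG G. fst c1 \<inter> fst c2 \<noteq> {}})
       / (real (X_count n K EG G))^2)"

end

theory Submission
  imports Defs
begin

locale plant =
  fixes lam :: real and n K :: nat and EG :: "nat set set"
  assumes lam_pos: "lam > 0" and n_big: "real n > lam"
    and graph: "EG \<subseteq> all_edges K" and Kn: "K \<le> n"
begin

definition "N = all_edges n"
definition "p = lam / real n"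
definition "Inj = injections K n"
definition "E \<phi> = (\<lambda>e. \<phi> ` e) ` EG"
definition "m = card EG"

lemma n_pos: "n > 0" using lam_pos n_big by (cases n) auto
lemma p_pos: "p > 0" "p < 1" "p \<le> 1" "p \<ge> 0"
  using lam_pos n_big n_pos by (auto simp: p_def field_simps)

lemma finite_N: "finite N"
proof -
  have "N \<subseteq> Pow {..<n}" by (auto simp: N_def all_edges_def)
  thus ?thesis by (rule finite_subset) auto
qed

lemma EG_sub: "e \<in> EG \<Longrightarrow> e \<subseteq> {..<K} \<and> card e = 2"
  using graph by (auto simp: all_edges_def)

lemma finite_EG: "finite EG"
proof -
  have "EG \<subseteq> Pow {..<K}" using EG_sub by auto
  thus ?thesis by (rule finite_subset) auto
qed

lemma finite_Inj: "finite Inj"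
proof -
  have "Inj \<subseteq> {..<K} \<rightarrow>\<^sub>E {..<n}" by (auto simp: Inj_def injections_def)
  thus ?thesis by (rule finite_subset) (auto intro: finite_PiE)
qed

lemma card_Inj_gen:
  assumes "finite C"
  shows "card {\<phi>. \<phi> \<in> {..<K} \<rightarrow>\<^sub>E C \<and> inj_on \<phi> {..<K}} = (\<Prod>i<K. card C - i)"
proof -
  have "card {f \<in> {..<K} \<rightarrow>\<^sub>E C. inj_on f {..<K}} =
    card C^(card {..<K} - card {..<K}) * prod ((-) (card C)) {0 ..< card {..<K}}"
    by (rule card_inj_on_subset_funcset) (use assms in auto)
  also have "\<dots> = (\<Prod>i<K. card C - i)" by (simp add: atLeast0LessThan)
  finally show ?thesis by simp
qed

lemma card_Inj: "card Inj = (\<Prod>i<K. n - i)"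
  using card_Inj_gen[of "{..<n}"] by (simp add: Inj_def injections_def)

lemma card_Inj_pos: "card Inj > 0"
  unfolding card_Inj using Kn by (auto simp: prod_pos)

lemma Inj_ne: "Inj \<noteq> {}" using card_Inj_pos by auto

lemma E_props:
  assumes "\<phi> \<in> Inj"
  shows "E \<phi> \<subseteq> N" "card (E \<phi>) = m"
proof -
  have inj: "inj_on \<phi> {..<K}" and rng: "\<phi> ` {..<K} \<subseteq> {..<n}"
    using assms by (auto simp: Inj_def injections_def)
  show "E \<phi> \<subseteq> N"
  proof
    fix x assume "x \<in> E \<phi>"
    then obtain e where e: "e \<in> EG" "x = \<phi> ` e" by (auto simp: E_def)
    have "card x = 2" using e EG_sub[OF e(1)] inj
      by (metis card_image inj_on_subset)
    moreover have "x \<subseteq> {..<n}" using e EG_sub[OF e(1)] rng by auto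
    ultimately show "x \<in> N" by (simp add: N_def all_edges_def)
  qed
  have "inj_on (\<lambda>e. \<phi> ` e) EG"
    by (rule inj_onI) (metis EG_sub inj inj_on_image_eq_iff)
  thus "card (E \<phi>) = m" by (simp add: E_def m_def card_image)
qed

lemma P0_eq: "P0 lam n = map_pmf (\<lambda>f. {e \<in> N. f e}) (Pi_pmf N False (\<lambda>_. bernoulli_pmf p))"
  by (simp add: P0_def ER_def N_def p_def)

lemma set_P0: "set_pmf (P0 lam n) \<subseteq> Pow N"
  unfolding P0_eq by auto

lemma finite_set_P0: "finite (set_pmf (P0 lam n))"
  using set_P0 finite_N by (meson finite_Pow_iff finite_subset)

lemma integrable_P0[simp]: "integrable (measure_pmf (P0 lam n)) (f :: _ \<Rightarrow> real)"
  using finite_set_P0 by (simp add: integrable_measure_pmf_finite)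

lemma P0_meas:
  assumes "\<And>f. ({e \<in> N. f e} \<in> U) = (\<forall>e\<in>N. f e \<in> B e)"
  shows "measure_pmf.prob (P0 lam n) U = (\<Prod>e\<in>N. measure_pmf.prob (bernoulli_pmf p) (B e))"
proof -
  have "(\<lambda>f. {e \<in> N. f e}) -` U = Pi N B" using assms by (auto simp: Pi_def)
  thus ?thesis unfolding P0_eq measure_map_pmf
    by (simp add: measure_Pi_pmf_Pi finite_N)
qed

lemma bern_meas: "measure_pmf.prob (bernoulli_pmf p) UNIV = 1"
  "measure_pmf.prob (bernoulli_pmf p) {True} = p"
  "measure_pmf.prob (bernoulli_pmf p) {False} = 1 - p"
  using p_pos by (auto simp: measure_pmf_single)

lemma prob_sup:
  assumes "S \<subseteq> N"
  shows "measure_pmf.prob (P0 lam n) {G. S \<subseteq> G} = p ^ card S"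
proof -
  have "measure_pmf.prob (P0 lam n) {G. S \<subseteq> G} =
     (\<Prod>e\<in>N. measure_pmf.prob (bernoulli_pmf p) (if e \<in> S then {True} else UNIV))"
    by (rule P0_meas) (use assms in auto)
  also have "\<dots> = (\<Prod>e\<in>N. if e \<in> S then p else 1)"
    by (rule prod.cong) (auto simp: bern_meas)
  also have "\<dots> = p ^ card S"
    using assms finite_N by (simp add: prod.If_cases Int_absorb1)
  finally show ?thesis .
qed

lemma pmf_P0:
  assumes "G \<subseteq> N"
  shows "pmf (P0 lam n) G = (\<Prod>e\<in>N. if e \<in> G then p else 1 - p)"
proof -
  have "pmf (P0 lam n) G = measure_pmf.prob (P0 lam n) {G}" by (simp add: measure_pmf_single)
  also have "\<dots> = (\<Prod>e\<in>N. measure_pmf.prob (bernoulli_pmf p) {e \<in> G})"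
    by (rule P0_meas) (use assms in auto)
  also have "\<dots> = (\<Prod>e\<in>N. if e \<in> G then p else 1 - p)"
    by (rule prod.cong) (auto simp: bern_meas)
  finally show ?thesis .
qed

lemma pmf_P0_pos:
  assumes "G \<subseteq> N" shows "pmf (P0 lam n) G > 0"
  unfolding pmf_P0[OF assms] using p_pos by (intro prod_pos) auto

lemma prob_union:
  assumes "A \<subseteq> G" "G \<subseteq> N"
  shows "pmf (P0 lam n) G = p ^ card A * measure_pmf.prob (P0 lam n) {G0. G0 \<union> A = G}"
proof -
  have "measure_pmf.prob (P0 lam n) {G0. G0 \<union> A = G} =
     (\<Prod>e\<in>N. measure_pmf.prob (bernoulli_pmf p) (if e \<in> A then UNIV else {e \<in> G}))"
    by (rule P0_meas) (use assms in auto)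
  also have "\<dots> = (\<Prod>e\<in>N. if e \<in> A then 1 else if e \<in> G then p else 1 - p)"
    by (rule prod.cong) (auto simp: bern_meas)
  finally have 1: "measure_pmf.prob (P0 lam n) {G0. G0 \<union> A = G} = \<dots>" .
  have 2: "p ^ card A = (\<Prod>e\<in>N. if e \<in> A then p else 1)"
    using assms finite_N by (simp add: prod.If_cases Int_absorb1)
  have "pmf (P0 lam n) G = (\<Prod>e\<in>N. (if e \<in> A then p else 1) * (if e \<in> A then 1 else if e \<in> G then p else 1 - p))"
    unfolding pmf_P0[OF assms(2)] by (rule prod.cong) (use assms in auto)
  also have "\<dots> = p ^ card A * measure_pmf.prob (P0 lam n) {G0. G0 \<union> A = G}"
    unfolding 1 2 by (rule prod.distrib)
  finally show ?thesis .
qed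

lemma expect_bool: "measure_pmf.expectation M (\<lambda>x. of_bool (P x) :: real) = measure_pmf.prob M {x. P x}"
proof -
  have "(\<lambda>x. of_bool (P x) :: real) = indicator {x. P x}" by (auto simp: indicator_def)
  thus ?thesis by simp
qed

definition "Xi G = real (card {\<phi> \<in> Inj. E \<phi> \<subseteq> G})"
definition "mu = real (card Inj) * p ^ m"

lemma mu_pos: "mu > 0" using card_Inj_pos p_pos by (simp add: mu_def)

lemma Xi_sum: "Xi G = (\<Sum>\<phi>\<in>Inj. of_bool (E \<phi> \<subseteq> G))"
  using finite_Inj by (simp add: Xi_def sum_of_bool_eq Collect_conj_eq Int_commute)

lemma pmf_P1:
  "pmf (P1 lam n K EG) G = (\<Sum>\<phi>\<in>Inj. measure_pmf.prob (P0 lam n) {G0. G0 \<union> E \<phi> = G}) / real (card Inj)"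
proof -
  have "pmf (P1 lam n K EG) G = measure_pmf.expectation (P0 lam n)
     (\<lambda>G0. (\<Sum>\<phi>\<in>Inj. of_bool (G0 \<union> E \<phi> = G)) / real (card Inj))"
    unfolding P1_def pmf_bind pmf_map
    apply (rule Bochner_Integration.integral_cong[OF refl])
    using finite_Inj Inj_ne
    by (simp add: measure_pmf_of_set sum_of_bool_eq Inj_def[symmetric] E_def[abs_def] vimage_def Collect_conj_eq Int_commute)
  also have "\<dots> = (\<Sum>\<phi>\<in>Inj. measure_pmf.prob (P0 lam n) {G0. G0 \<union> E \<phi> = G}) / real (card Inj)"
    by (simp add: expect_bool)
  finally show ?thesis .
qed

lemma LR_eq:
  assumes "G \<subseteq> N"
  shows "LR lam n K EG G = Xi G / mu"
proof -
  have "\<forall>\<phi>\<in>Inj. measure_pmf.prob (P0 lam n) {G0. G0 \<union> E \<phi> = G} = of_bool (E \<phi> \<subseteq> G) * (pmf (P0 lam n) G / p ^ m)"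
  proof
    fix \<phi> assume ph: "\<phi> \<in> Inj"
    show "measure_pmf.prob (P0 lam n) {G0. G0 \<union> E \<phi> = G} = of_bool (E \<phi> \<subseteq> G) * (pmf (P0 lam n) G / p ^ m)"
    proof (cases "E \<phi> \<subseteq> G")
      case True
      from prob_union[OF True assms] E_props[OF ph] p_pos True show ?thesis by (simp add: field_simps)
    next
      case False
      hence "{G0. G0 \<union> E \<phi> = G} = {}" by auto
      thus ?thesis using False by simp
    qed
  qed
  hence "(\<Sum>\<phi>\<in>Inj. measure_pmf.prob (P0 lam n) {G0. G0 \<union> E \<phi> = G}) = (\<Sum>\<phi>\<in>Inj. of_bool (E \<phi> \<subseteq> G) * (pmf (P0 lam n) G / p ^ m))"
    by (intro sum.cong) auto
  hence "pmf (P1 lam n K EG) G = (\<Sum>\<phi>\<in>Inj. of_bool (E \<phi> \<subseteq> G)) * (pmf (P0 lam n) G / p ^ m) / real (card Inj)"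
    unfolding pmf_P1 by (simp only: sum_distrib_right)
  thus ?thesis using pmf_P0_pos[OF assms] p_pos card_Inj_pos
    unfolding LR_def Xi_sum[symmetric] mu_def by (simp add: field_simps)
qed

lemma EL2: "measure_pmf.expectation (P0 lam n) (\<lambda>G. (LR lam n K EG G)^2) =
   measure_pmf.expectation (P0 lam n) (\<lambda>G. (Xi G)^2) / mu^2"
proof -
  have "measure_pmf.expectation (P0 lam n) (\<lambda>G. (LR lam n K EG G)^2) =
     measure_pmf.expectation (P0 lam n) (\<lambda>G. (Xi G)^2 / mu^2)"
    by (rule integral_cong_AE) (use set_P0 LR_eq in \<open>auto simp: AE_measure_pmf_iff power_divide\<close>)
  thus ?thesis by simp
qed

definition "img \<phi> = \<phi> ` {..<K}"
definition "Yi G = (\<Sum>\<phi>\<in>Inj. \<Sum>\<psi>\<in>Inj. of_bool (img \<phi> \<inter> img \<psi> \<noteq> {}) * (of_bool (E \<phi> \<union> E \<psi> \<subseteq> G) :: real))"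
definition "Dis = (\<Sum>\<phi>\<in>Inj. \<Sum>\<psi>\<in>Inj. (of_bool (img \<phi> \<inter> img \<psi> = {}) :: real))"

lemma Xi_sq: "(Xi G)^2 = (\<Sum>\<phi>\<in>Inj. \<Sum>\<psi>\<in>Inj. of_bool (E \<phi> \<union> E \<psi> \<subseteq> G))"
  unfolding Xi_sum power2_eq_square sum_product by (intro sum.cong refl) auto

lemma expect_double:
  "measure_pmf.expectation (P0 lam n) (\<lambda>G. \<Sum>\<phi>\<in>Inj. \<Sum>\<psi>\<in>Inj. c \<phi> \<psi> * of_bool (Q \<phi> \<psi> G)) =
   (\<Sum>\<phi>\<in>Inj. \<Sum>\<psi>\<in>Inj. c \<phi> \<psi> * measure_pmf.prob (P0 lam n) {G. Q \<phi> \<psi> G})"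
  by (simp add: expect_bool)

lemma EXi: "measure_pmf.expectation (P0 lam n) Xi = mu"
proof -
  have "measure_pmf.expectation (P0 lam n) Xi = (\<Sum>\<phi>\<in>Inj. measure_pmf.prob (P0 lam n) {G. E \<phi> \<subseteq> G})"
    unfolding Xi_sum by (simp add: expect_bool)
  also have "\<dots> = (\<Sum>\<phi>\<in>Inj. p ^ m)"
    by (intro sum.cong refl) (simp add: prob_sup E_props)
  finally show ?thesis by (simp add: mu_def)
qed

lemma disj_E:
  assumes "\<phi> \<in> Inj" "\<psi> \<in> Inj" "img \<phi> \<inter> img \<psi> = {}"
  shows "card (E \<phi> \<union> E \<psi>) = 2 * m"
proof -
  have "E \<phi> \<inter> E \<psi> = {}"
  proof (rule ccontr)
    assume "E \<phi> \<inter> E \<psi> \<noteq> {}"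
    then obtain e e' where e: "e \<in> EG" "e' \<in> EG" "\<phi> ` e = \<psi> ` e'" by (auto simp: E_def)
    have "e \<noteq> {}" using EG_sub[OF e(1)] by auto
    then obtain x where "x \<in> e" by auto
    hence "\<phi> x \<in> \<psi> ` e'" using e(3) by blast
    thus False using assms(3) \<open>x \<in> e\<close> EG_sub[OF e(1)] EG_sub[OF e(2)]
      by (auto simp: img_def)
  qed
  moreover have "finite (E \<phi>)" "finite (E \<psi>)" using finite_EG by (auto simp: E_def)
  ultimately show ?thesis using E_props assms by (simp add: card_Un_disjoint)
qed

lemma EXi2_EYi:
  "measure_pmf.expectation (P0 lam n) (\<lambda>G. (Xi G)^2) - measure_pmf.expectation (P0 lam n) Yi
    = Dis * p ^ (2 * m)"
proof -
  have a: "measure_pmf.expectation (P0 lam n) (\<lambda>G. (Xi G)^2) =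
     (\<Sum>\<phi>\<in>Inj. \<Sum>\<psi>\<in>Inj. 1 * measure_pmf.prob (P0 lam n) {G. E \<phi> \<union> E \<psi> \<subseteq> G})"
    unfolding Xi_sq using expect_double[of "\<lambda>_ _. 1" "\<lambda>\<phi> \<psi> G. E \<phi> \<union> E \<psi> \<subseteq> G"] by simp
  have b: "measure_pmf.expectation (P0 lam n) Yi =
     (\<Sum>\<phi>\<in>Inj. \<Sum>\<psi>\<in>Inj. of_bool (img \<phi> \<inter> img \<psi> \<noteq> {}) * measure_pmf.prob (P0 lam n) {G. E \<phi> \<union> E \<psi> \<subseteq> G})"
    unfolding Yi_def[abs_def] by (rule expect_double)
  have "(\<Sum>\<phi>\<in>Inj. \<Sum>\<psi>\<in>Inj. 1 * measure_pmf.prob (P0 lam n) {G. E \<phi> \<union> E \<psi> \<subseteq> G}) -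
     (\<Sum>\<phi>\<in>Inj. \<Sum>\<psi>\<in>Inj. of_bool (img \<phi> \<inter> img \<psi> \<noteq> {}) * measure_pmf.prob (P0 lam n) {G. E \<phi> \<union> E \<psi> \<subseteq> G})
    = (\<Sum>\<phi>\<in>Inj. \<Sum>\<psi>\<in>Inj. of_bool (img \<phi> \<inter> img \<psi> = {}) * measure_pmf.prob (P0 lam n) {G. E \<phi> \<union> E \<psi> \<subseteq> G})"
    by (simp add: sum_subtractf[symmetric]) (intro sum.cong refl, simp add: algebra_simps)
  also have "\<dots> = (\<Sum>\<phi>\<in>Inj. \<Sum>\<psi>\<in>Inj. of_bool (img \<phi> \<inter> img \<psi> = {}) * p ^ (2 * m))"
  proof (intro sum.cong refl)
    fix \<phi> \<psi> assume "\<phi> \<in> Inj" "\<psi> \<in> Inj"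
    thus "of_bool (img \<phi> \<inter> img \<psi> = {}) * measure_pmf.prob (P0 lam n) {G. E \<phi> \<union> E \<psi> \<subseteq> G} =
          of_bool (img \<phi> \<inter> img \<psi> = {}) * p ^ (2 * m)"
      using disj_E[of \<phi> \<psi>] prob_sup[of "E \<phi> \<union> E \<psi>"] E_props by auto
  qed
  also have "\<dots> = Dis * p ^ (2 * m)" by (simp add: Dis_def sum_distrib_right)
  finally show ?thesis using a b by simp
qed

lemma Dis_eq: "Dis = real (card Inj) * (\<Prod>i<K. real (n - K - i))"
proof -
  have "\<forall>\<phi>\<in>Inj. (\<Sum>\<psi>\<in>Inj. (of_bool (img \<phi> \<inter> img \<psi> = {}) :: real)) = (\<Prod>i<K. real (n - K - i))"
  proof
    fix \<phi> assume ph: "\<phi> \<in> Inj"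
    have inj: "inj_on \<phi> {..<K}" and rng: "\<phi> ` {..<K} \<subseteq> {..<n}"
      using ph by (auto simp: Inj_def injections_def)
    have ci: "card (img \<phi>) = K" using inj by (simp add: img_def card_image)
    have "{\<psi> \<in> Inj. img \<phi> \<inter> img \<psi> = {}} = {\<psi>. \<psi> \<in> {..<K} \<rightarrow>\<^sub>E ({..<n} - img \<phi>) \<and> inj_on \<psi> {..<K}}"
      by (auto simp: Inj_def injections_def img_def PiE_def Pi_def) (metis image_eqI lessThan_iff)
    hence "card {\<psi> \<in> Inj. img \<phi> \<inter> img \<psi> = {}} = (\<Prod>i<K. card ({..<n} - img \<phi>) - i)"
      using card_Inj_gen[of "{..<n} - img \<phi>"] by simp
    also have "card ({..<n} - img \<phi>) = n - K"
      using rng ci by (simp add: card_Diff_subset img_def finite_subset)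
    finally have "card {\<psi> \<in> Inj. img \<phi> \<inter> img \<psi> = {}} = (\<Prod>i<K. n - K - i)" .
    thus "(\<Sum>\<psi>\<in>Inj. (of_bool (img \<phi> \<inter> img \<psi> = {}) :: real)) = (\<Prod>i<K. real (n - K - i))"
      using finite_Inj by (simp add: sum_of_bool_eq Collect_conj_eq Int_commute)
  qed
  thus ?thesis unfolding Dis_def by simp
qed

lemma Dis_bound:
  assumes "2 * K \<le> n"
  shows "Dis \<ge> (real (card Inj))^2 * (1 - 2 * real K ^ 2 / real n)"
proof -
  define c where "c = 1 - 2 * real K / real n"
  have c0: "c \<ge> 0" using assms n_pos by (simp add: c_def field_simps)
  have "(\<Prod>i<K. c * real (n - i)) \<le> (\<Prod>i<K. real (n - K - i))"
  proof (rule prod_mono)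
    fix i assume i: "i \<in> {..<K}"
    have g1: "0 \<le> c * real (n - i)" using c0 by simp
    have e1: "real (n - i) = real n - i" "real (n - K - i) = real n - K - i" using i assms by auto
    have "2 * real K * i \<le> 2 * real K * K" using i by (intro mult_left_mono) auto
    also have "\<dots> \<le> real n * K" using assms by (intro mult_right_mono) auto
    finally have "2 * real K * i \<le> real n * K" .
    hence "(real n - 2 * K) * (real n - i) \<le> real n * (real n - K - i)" by (simp add: algebra_simps)
    hence "c * real (n - i) \<le> real (n - K - i)" unfolding e1 c_def using n_pos
      by (simp add: field_simps)
    thus "0 \<le> c * real (n - i) \<and> c * real (n - i) \<le> real (n - K - i)" using g1 by simp
  qed
  hence "c ^ K * real (card Inj) \<le> (\<Prod>i<K. real (n - K - i))"
    by (simp add: prod.distrib card_Inj)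
  moreover have "1 - 2 * real K ^ 2 / real n \<le> c ^ K"
  proof -
    have "1 + real K * (- 2 * real K / real n) \<le> (1 + (- 2 * real K / real n)) ^ K"
      by (rule Bernoulli_inequality) (use c0 in \<open>simp add: c_def\<close>)
    thus ?thesis by (simp add: c_def power2_eq_square mult.assoc mult.left_commute)
  qed
  ultimately have "(1 - 2 * real K ^ 2 / real n) * real (card Inj) \<le> (\<Prod>i<K. real (n - K - i))"
    by (meson mult_right_mono of_nat_0_le_iff order_trans)
  hence "real (card Inj) * ((1 - 2 * real K ^ 2 / real n) * real (card Inj)) \<le> Dis"
    unfolding Dis_eq by (intro mult_left_mono) auto
  thus ?thesis by (simp add: power2_eq_square algebra_simps)
qed

definition "cp \<phi> = (img \<phi>, E \<phi>)"
definition "AG G = {\<phi> \<in> Inj. E \<phi> \<subseteq> G}"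
definition "fib \<phi>0 = {\<phi> \<in> Inj. cp \<phi> = cp \<phi>0}"
definition "Aut = {\<sigma> \<in> injections K K. E \<sigma> = EG}"

lemma E_restrict: "E (restrict f {..<K}) = E f"
  unfolding E_def
proof (rule image_cong[OF refl])
  fix e assume "e \<in> EG"
  hence "e \<subseteq> {..<K}" using EG_sub by auto
  thus "restrict f {..<K} ` e = f ` e" by (auto simp: restrict_def)
qed

lemma copies_eq: "copies n K EG G = cp ` AG G"
proof (intro equalityI subsetI)
  fix c assume "c \<in> copies n K EG G"
  then obtain V F \<phi> where c: "c = (V, F)" "V \<subseteq> {..<n}" "F \<subseteq> G" "bij_betw \<phi> {..<K} V" "F = E \<phi>"
    by (auto simp: copies_def E_def)
  define \<psi> where "\<psi> = restrict \<phi> {..<K}"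
  have "\<psi> \<in> Inj" using c(2,4) unfolding \<psi>_def Inj_def injections_def
    by (auto simp: bij_betw_def inj_on_def)
  moreover have "img \<psi> = V" using c(4) by (auto simp: \<psi>_def img_def bij_betw_def)
  moreover have "E \<psi> = F" using c(5) by (simp add: \<psi>_def E_restrict)
  ultimately show "c \<in> cp ` AG G" using c(1,3) by (auto simp: cp_def AG_def)
next
  fix c assume "c \<in> cp ` AG G"
  then obtain \<phi> where ph: "\<phi> \<in> Inj" "E \<phi> \<subseteq> G" "c = cp \<phi>" by (auto simp: AG_def)
  have "bij_betw \<phi> {..<K} (img \<phi>)" using ph(1)
    by (auto simp: Inj_def injections_def img_def intro: inj_on_imp_bij_betw)
  moreover have "img \<phi> \<subseteq> {..<n}" using ph(1) by (auto simp: Inj_def injections_def img_def)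
  ultimately show "c \<in> copies n K EG G" using ph unfolding copies_def cp_def E_def by auto
qed

lemma fib_card:
  assumes ph0: "\<phi>0 \<in> Inj"
  shows "card (fib \<phi>0) = card Aut"
proof -
  have inj0: "inj_on \<phi>0 {..<K}" and rng0: "\<phi>0 \<in> {..<K} \<rightarrow>\<^sub>E {..<n}"
    using ph0 by (auto simp: Inj_def injections_def)
  define iv where "iv = inv_into {..<K} \<phi>0"
  define f where "f \<sigma> = restrict (\<phi>0 \<circ> \<sigma>) {..<K}" for \<sigma> :: "nat \<Rightarrow> nat"
  define g where "g \<phi> = restrict (iv \<circ> \<phi>) {..<K}" for \<phi> :: "nat \<Rightarrow> nat"
  have ivE: "(\<lambda>e. iv ` e) ` E \<phi>0 = EG"
  proof -
    have "(\<lambda>e. iv ` e) ` E \<phi>0 = (\<lambda>e. iv ` \<phi>0 ` e) ` EG" by (simp add: E_def image_image)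
    also have "\<dots> = (\<lambda>e. e) ` EG"
      by (intro image_cong refl) (use EG_sub inj0 in \<open>auto simp: iv_def inv_into_image_cancel\<close>)
    finally show ?thesis by simp
  qed
  have "bij_betw f Aut (fib \<phi>0)"
  proof (rule bij_betw_byWitness[where f'=g])
    show "\<forall>\<sigma>\<in>Aut. g (f \<sigma>) = \<sigma>"
    proof
      fix \<sigma> assume "\<sigma> \<in> Aut"
      hence s: "\<sigma> \<in> {..<K} \<rightarrow>\<^sub>E {..<K}" by (auto simp: Aut_def injections_def)
      show "g (f \<sigma>) = \<sigma>"
      proof
        fix x show "g (f \<sigma>) x = \<sigma> x"
        proof (cases "x < K")
          case True
          hence "\<sigma> x \<in> {..<K}" using s by auto
          thus ?thesis using True inj0 by (simp add: g_def f_def iv_def inv_into_f_f)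
        next
          case False thus ?thesis using s by (auto simp: g_def PiE_def extensional_def)
        qed
      qed
    qed
    show "\<forall>\<phi>\<in>fib \<phi>0. f (g \<phi>) = \<phi>"
    proof
      fix \<phi> assume "\<phi> \<in> fib \<phi>0"
      hence p: "\<phi> \<in> {..<K} \<rightarrow>\<^sub>E {..<n}" "img \<phi> = img \<phi>0"
        by (auto simp: fib_def Inj_def injections_def cp_def)
      show "f (g \<phi>) = \<phi>"
      proof
        fix x show "f (g \<phi>) x = \<phi> x"
        proof (cases "x < K")
          case True
          hence "\<phi> x \<in> \<phi>0 ` {..<K}" using p(2) by (auto simp: img_def)
          thus ?thesis using True by (simp add: f_def g_def iv_def f_inv_into_f)
        next
          case False thus ?thesis using p(1) by (auto simp: f_def PiE_def extensional_def)
        qed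
      qed
    qed
    show "f ` Aut \<subseteq> fib \<phi>0"
    proof
      fix \<psi> assume "\<psi> \<in> f ` Aut"
      then obtain \<sigma> where s: "\<sigma> \<in> Aut" "\<psi> = f \<sigma>" by auto
      have s1: "\<sigma> ` {..<K} \<subseteq> {..<K}" "inj_on \<sigma> {..<K}" "E \<sigma> = EG"
        using s(1) by (auto simp: Aut_def injections_def)
      have s2: "\<sigma> ` {..<K} = {..<K}" using s1 by (simp add: endo_inj_surj)
      have "\<psi> \<in> Inj" using s1 rng0 inj0 unfolding s(2) f_def Inj_def injections_def
        by (auto intro: comp_inj_on inj_on_subset simp: PiE_iff image_subset_iff)
      moreover have "img \<psi> = img \<phi>0" unfolding s(2) f_def img_def using s2
        by (metis image_comp image_restrict_eq o_def)
      moreover have "E \<psi> = E \<phi>0"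
      proof -
        have "E \<psi> = E (\<phi>0 \<circ> \<sigma>)" unfolding s(2) f_def by (rule E_restrict)
        also have "\<dots> = (\<lambda>e. \<phi>0 ` e) ` E \<sigma>" by (simp add: E_def image_image image_comp)
        finally show ?thesis using s1(3) by (simp add: E_def)
      qed
      ultimately show "\<psi> \<in> fib \<phi>0" by (simp add: fib_def cp_def)
    qed
    show "g ` fib \<phi>0 \<subseteq> Aut"
    proof
      fix \<tau> assume "\<tau> \<in> g ` fib \<phi>0"
      then obtain \<phi> where s: "\<phi> \<in> fib \<phi>0" "\<tau> = g \<phi>" by auto
      have p: "inj_on \<phi> {..<K}" "img \<phi> = img \<phi>0" "E \<phi> = E \<phi>0"
        using s(1) by (auto simp: fib_def Inj_def injections_def cp_def)
      have ivK: "iv ` img \<phi>0 \<subseteq> {..<K}" using inj0 by (auto simp: iv_def img_def inv_into_f_f)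
      have ivinj: "inj_on iv (img \<phi>0)" by (simp add: iv_def img_def inj_on_inv_into)
      have "\<tau> \<in> {..<K} \<rightarrow>\<^sub>E {..<K}" using ivK p(2) unfolding s(2) g_def img_def by (auto simp: PiE_iff) (metis imageI image_subset_iff lessThan_iff)
      moreover have "inj_on \<tau> {..<K}"
      proof -
        have "inj_on (iv \<circ> \<phi>) {..<K}"
          by (rule comp_inj_on[OF p(1)]) (use ivinj p(2) in \<open>simp add: img_def\<close>)
        thus ?thesis unfolding s(2) g_def by (simp add: inj_on_def)
      qed
      moreover have "E \<tau> = EG"
      proof -
        have "E \<tau> = E (iv \<circ> \<phi>)" unfolding s(2) g_def by (rule E_restrict)
        also have "\<dots> = (\<lambda>e. iv ` e) ` E \<phi>" by (simp add: E_def image_image image_comp)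
        finally show ?thesis using p(3) ivE by simp
      qed
      ultimately show "\<tau> \<in> Aut" by (simp add: Aut_def injections_def)
    qed
  qed
  thus ?thesis by (simp add: bij_betw_same_card[symmetric])
qed

lemma card_fibers:
  assumes "finite A" "\<And>x. x \<in> A \<Longrightarrow> card {y \<in> A. f y = f x} = a"
  shows "card A = a * card (f ` A)"
proof -
  have "card A = (\<Sum>c\<in>f ` A. \<Sum>y\<in>{y \<in> A. f y = c}. 1)"
    using sum.group[OF assms(1) finite_imageI[OF assms(1)] subset_refl, where g=f and h="\<lambda>_. 1::nat"] by simp
  also have "\<dots> = (\<Sum>c\<in>f ` A. a)" using assms(2) by (intro sum.cong refl) auto
  finally show ?thesis by simp
qed

definition "BG G = {(\<phi>, \<psi>) \<in> AG G \<times> AG G. img \<phi> \<inter> img \<psi> \<noteq> {}}"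

lemma finite_AG: "finite (AG G)" using finite_Inj by (simp add: AG_def)

lemma Xi_AG: "Xi G = real (card (AG G))" by (simp add: Xi_def AG_def)

lemma Yi_BG: "Yi G = real (card (BG G))"
proof -
  have "Yi G = (\<Sum>(\<phi>, \<psi>)\<in>Inj \<times> Inj. of_bool (img \<phi> \<inter> img \<psi> \<noteq> {} \<and> E \<phi> \<union> E \<psi> \<subseteq> G))"
    unfolding Yi_def sum.cartesian_product by (intro sum.cong refl) auto
  also have "\<dots> = (\<Sum>x\<in>Inj \<times> Inj. of_bool ((\<lambda>(\<phi>, \<psi>). img \<phi> \<inter> img \<psi> \<noteq> {} \<and> E \<phi> \<union> E \<psi> \<subseteq> G) x))"
    by (intro sum.cong refl) auto
  also have "\<dots> = real (card ((Inj \<times> Inj) \<inter> {x. (\<lambda>(\<phi>, \<psi>). img \<phi> \<inter> img \<psi> \<noteq> {} \<and> E \<phi> \<union> E \<psi> \<subseteq> G) x}))"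
    using finite_Inj by (simp add: sum_of_bool_eq)
  also have "(Inj \<times> Inj) \<inter> {x. (\<lambda>(\<phi>, \<psi>). img \<phi> \<inter> img \<psi> \<noteq> {} \<and> E \<phi> \<union> E \<psi> \<subseteq> G) x} = BG G"
    by (auto simp: BG_def AG_def)
  finally show ?thesis .
qed

lemma I_stat_eq:
  "I_stat n K EG G = (if Xi G = 0 then 0 else Yi G / (Xi G)^2)" and Yi_le: "Yi G \<le> (Xi G)^2"
proof -
  define a where "a = card Aut"
  have fibA: "{y \<in> AG G. cp y = cp x} = fib x" if "x \<in> AG G" for x
    using that by (auto simp: AG_def fib_def cp_def)
  have cA: "card (AG G) = a * card (cp ` AG G)"
  proof (rule card_fibers[OF finite_AG])
    fix x assume x: "x \<in> AG G"
    hence "x \<in> Inj" by (simp add: AG_def)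
    thus "card {y \<in> AG G. cp y = cp x} = a" using fibA[OF x] fib_card by (simp add: a_def)
  qed
  define cp2 :: "(nat \<Rightarrow> nat) \<times> (nat \<Rightarrow> nat) \<Rightarrow> (nat set \<times> nat set set) \<times> (nat set \<times> nat set set)"
    where "cp2 = (\<lambda>(\<phi>, \<psi>). (cp \<phi>, cp \<psi>))"
  have fibB: "{y \<in> BG G. cp2 y = cp2 x} = fib (fst x) \<times> fib (snd x)" if "x \<in> BG G" for x
    using that by (auto simp: BG_def AG_def fib_def cp_def cp2_def)
  have finB: "finite (BG G)"
    by (rule finite_subset[of _ "AG G \<times> AG G"]) (auto simp: BG_def finite_AG)
  have cB: "card (BG G) = (a * a) * card (cp2 ` BG G)"
  proof (rule card_fibers[OF finB])
    fix x assume x: "x \<in> BG G"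
    hence "fst x \<in> Inj" "snd x \<in> Inj" by (auto simp: BG_def AG_def)
    thus "card {y \<in> BG G. cp2 y = cp2 x} = a * a" using fibB[OF x] fib_card
      by (simp add: a_def card_cartesian_product)
  qed
  have imB: "cp2 ` BG G = {(c1, c2) \<in> copies n K EG G \<times> copies n K EG G. fst c1 \<inter> fst c2 \<noteq> {}}"
    unfolding copies_eq by (auto simp: cp2_def BG_def cp_def image_iff) blast
  have BsubA: "BG G \<subseteq> AG G \<times> AG G" by (auto simp: BG_def)
  hence "card (BG G) \<le> card (AG G \<times> AG G)" using finite_AG by (intro card_mono) auto
  thus "Yi G \<le> (Xi G)^2" unfolding Yi_BG Xi_AG by (simp add: card_cartesian_product power2_eq_square flip: of_nat_mult)
  show "I_stat n K EG G = (if Xi G = 0 then 0 else Yi G / (Xi G)^2)"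
  proof (cases "Xi G = 0")
    case True
    hence "AG G = {}" using finite_AG by (simp add: Xi_AG)
    thus ?thesis using True by (simp add: I_stat_def X_count_def copies_eq)
  next
    case False
    hence a0: "a > 0" and c0: "card (cp ` AG G) > 0" using cA by (auto simp: Xi_AG)
    hence "X_count n K EG G \<noteq> 0" by (simp add: X_count_def copies_eq)
    thus ?thesis using False a0 unfolding I_stat_def Yi_BG Xi_AG cB cA imB
      by (simp add: X_count_def copies_eq field_simps power2_eq_square)
  qed
qed

lemma I_bound: "I_stat n K EG G \<le> 4 * Yi G / mu^2 + 4 * (Xi G - mu)^2 / mu^2"
proof -
  have Yi0: "Yi G \<ge> 0" by (simp add: Yi_BG)
  have Xi0: "Xi G \<ge> 0" by (simp add: Xi_AG)
  have mp: "mu > 0" by (rule mu_pos)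
  show ?thesis
  proof (cases "Xi G = 0")
    case True thus ?thesis using Yi0 mp by (simp add: I_stat_eq)
  next
    case False
    hence xp: "Xi G > 0" using Xi0 by simp
    show ?thesis
    proof (cases "2 * Xi G \<ge> mu")
      case True
      have "Yi G / (Xi G)^2 \<le> Yi G / (mu / 2)^2"
        using True Yi0 mp by (intro divide_left_mono power_mono mult_pos_pos) auto
      also have "\<dots> = 4 * Yi G / mu^2" by (simp add: power2_eq_square field_simps)
      finally have h: "Yi G / (Xi G)^2 \<le> 4 * Yi G / mu^2" .
      have "0 \<le> 4 * (Xi G - mu)^2 / mu^2" by simp
      moreover have "I_stat n K EG G = Yi G / (Xi G)^2" using False by (simp add: I_stat_eq)
      ultimately show ?thesis using h by linarith
    next
      case False2: False
      have "Yi G / (Xi G)^2 \<le> 1" using Yi_le[of G] xp by simp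
      also have "1 \<le> 4 * (Xi G - mu)^2 / mu^2"
      proof -
        have "mu / 2 \<le> mu - Xi G" using False2 by simp
        hence "(mu/2)^2 \<le> (Xi G - mu)^2" using mp
          by (metis abs_le_square_iff abs_of_pos half_gt_zero minus_diff_eq abs_minus_cancel dual_order.trans abs_ge_self)
        thus ?thesis using mp by (simp add: field_simps power2_eq_square)
      qed
      finally have h: "Yi G / (Xi G)^2 \<le> 4 * (Xi G - mu)^2 / mu^2" .
      have "0 \<le> 4 * Yi G / mu^2" using Yi0 by simp
      moreover have "I_stat n K EG G = Yi G / (Xi G)^2" using False by (simp add: I_stat_eq)
      ultimately show ?thesis using h by linarith
    qed
  qed
qed

lemma EI_bound:
  assumes "2 * K \<le> n"
  shows "measure_pmf.expectation (P0 lam n) (I_stat n K EG) \<le>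
     8 * (measure_pmf.expectation (P0 lam n) (\<lambda>G. (LR lam n K EG G)^2) - 1) + 8 * real K ^ 2 / real n"
proof -
  define EX2 where "EX2 = measure_pmf.expectation (P0 lam n) (\<lambda>G. (Xi G)^2)"
  define EY where "EY = measure_pmf.expectation (P0 lam n) Yi"
  have mp: "mu > 0" by (rule mu_pos)
  have "measure_pmf.expectation (P0 lam n) (I_stat n K EG) \<le>
     measure_pmf.expectation (P0 lam n) (\<lambda>G. 4 * Yi G / mu^2 + 4 * (Xi G - mu)^2 / mu^2)"
    by (intro integral_mono) (auto simp: I_bound)
  also have "\<dots> = 4 * EY / mu^2 + 4 * measure_pmf.expectation (P0 lam n) (\<lambda>G. (Xi G)^2 - 2 * mu * Xi G + mu^2) / mu^2"
    by (simp add: EY_def power2_diff algebra_simps)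
  also have "measure_pmf.expectation (P0 lam n) (\<lambda>G. (Xi G)^2 - 2 * mu * Xi G + mu^2) = EX2 - mu^2"
    by (simp add: EX2_def EXi power2_eq_square)
  also have "EY = EX2 - Dis * p ^ (2 * m)" using EXi2_EYi by (simp add: EX2_def EY_def)
  finally have 1: "measure_pmf.expectation (P0 lam n) (I_stat n K EG) \<le>
      4 * (EX2 - Dis * p ^ (2 * m)) / mu^2 + 4 * (EX2 - mu^2) / mu^2" .
  have 2: "measure_pmf.expectation (P0 lam n) (\<lambda>G. (LR lam n K EG G)^2) = EX2 / mu^2"
    by (simp add: EL2 EX2_def)
  have 3: "Dis * p ^ (2 * m) / mu^2 \<ge> 1 - 2 * real K ^ 2 / real n"
  proof -
    have "mu^2 = (real (card Inj))^2 * p ^ (2 * m)" by (simp add: mu_def power_mult_distrib mult.commute flip: power_mult)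
    moreover have "p ^ (2 * m) > 0" using p_pos by simp
    ultimately show ?thesis using Dis_bound[OF assms] card_Inj_pos p_pos by (simp add: field_simps)
  qed
  have "4 * (EX2 - Dis * p ^ (2 * m)) / mu^2 + 4 * (EX2 - mu^2) / mu^2 =
        8 * (EX2 / mu^2) - 4 * (Dis * p ^ (2 * m) / mu^2) - 4"
    using mp by (simp add: field_simps)
  note eq4 = this
  have gen: "e \<le> 8*(b-1) + 4*d" if "e \<le> a" "a = 8*b - 4*c - 4" "1 - d \<le> c" for a b c d e :: real
    using that by (simp add: algebra_simps)
  have "8 * real K ^ 2 / real n = 4 * (2 * real K ^ 2 / real n)" by simp
  thus ?thesis unfolding 2 using gen[OF 1 eq4 3] by simp
qed

lemma EI_nonneg: "measure_pmf.expectation (P0 lam n) (I_stat n K EG) \<ge> 0"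
  by (intro integral_nonneg_AE) (auto simp: I_stat_def)

end

theorem lemma10:
  fixes lam :: real and K :: "nat \<Rightarrow> nat" and EG :: "nat \<Rightarrow> nat set set"
  assumes lam_pos: "lam > 0"
    and graph: "\<And>n. EG n \<subseteq> all_edges (K n)"
    and K_small: "(\<lambda>n. real (K n) / sqrt (real n)) \<longlonglongrightarrow> 0"
    and EX_big: "filterlim (\<lambda>n. measure_pmf.expectation (P0 lam n)
                   (\<lambda>G. real (X_count n (K n) (EG n) G))) at_top sequentially"
    and L2: "(\<lambda>n. measure_pmf.expectation (P0 lam n)
                   (\<lambda>G. (LR lam n (K n) (EG n) G)^2)) \<longlonglongrightarrow> 1"
  shows "(\<lambda>n. measure_pmf.expectation (P0 lam n) (I_stat n (K n) (EG n))) \<longlonglongrightarrow> 0"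
proof -
  define EL where "EL n = measure_pmf.expectation (P0 lam n) (\<lambda>G. (LR lam n (K n) (EG n) G)^2)" for n
  have ev1: "eventually (\<lambda>n. real (K n) / sqrt (real n) < 1/2) sequentially"
    using K_small by (rule order_tendstoD) simp
  have ev2: "eventually (\<lambda>n. real n > lam) sequentially"
    using filterlim_real_sequentially by (simp add: filterlim_at_top_dense)
  have ev3: "eventually (\<lambda>n. n \<ge> 1) sequentially" by (rule eventually_ge_at_top)
  have ev: "eventually (\<lambda>n. 0 \<le> measure_pmf.expectation (P0 lam n) (I_stat n (K n) (EG n)) \<and>
     measure_pmf.expectation (P0 lam n) (I_stat n (K n) (EG n)) \<le> 8 * (EL n - 1) + 8 * real (K n) ^ 2 / real n) sequentially"
    using ev1 ev2 ev3
  proof eventually_elim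
    case (elim n)
    have sq: "sqrt (real n) \<le> real n" using elim(3) by (simp add: real_sqrt_le_iff' real_le_rsqrt power2_eq_square)
    have "2 * real (K n) < sqrt (real n)" using elim(1) elim(3) by (simp add: field_simps)
    hence 2: "2 * K n \<le> n" using sq by linarith
    interpret plant lam n "K n" "EG n"
      by unfold_locales (use lam_pos elim(2) graph 2 in auto)
    show ?case using EI_nonneg EI_bound[OF 2] by (simp add: EL_def)
  qed
  have "(\<lambda>n. 8 * (EL n - 1) + 8 * (real (K n) / sqrt (real n)) ^ 2) \<longlonglongrightarrow> 8 * (1 - 1) + 8 * 0 ^ 2"
    by (intro tendsto_intros K_small) (use L2 in \<open>simp add: EL_def\<close>)
  moreover have "(real (K n) / sqrt (real n)) ^ 2 = real (K n) ^ 2 / real n" for n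
    by (simp add: power_divide)
  ultimately have lim: "(\<lambda>n. 8 * (EL n - 1) + 8 * real (K n) ^ 2 / real n) \<longlonglongrightarrow> 0" by simp
  show ?thesis
    by (rule tendsto_sandwich[OF _ _ tendsto_const lim]) (use ev in \<open>auto elim: eventually_mono\<close>)
qed

end
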